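(* Let $\phi$ be 1-Lipschitz with $|\phi''|\le H$, $R=R_{\max}/R_{\min}$, and consider one gradient descent step $W^{(t+1)}=W^{(t)}-\alpha\nabla\hat L(W^{(t)})$ on the logistic loss. Suppose that at time $t$ near-orthogonality of gradients holds with constant $C'\ge25R^2/c+25$, i.e. $\|\nabla f(x_i;W^{(t)})\|_F^2\ge C'n\max_{k\ne i}|\langle\nabla f(x_i;W^{(t)}),\nabla f(x_k;W^{(t)})\rangle|$ for all $i$, and gradient persistence holds with constant $c>0$, i.e. $\|\nabla f(x_i;W^{(t)})\|_F^2\ge c\|x_i\|^2$ for all $i$. If $\alpha\le[5HR_{\max}^2n(10R^2/c+10)]^{-1}$, then for all $i,j\in[n]$, $$\frac{e^{-y_if(x_i;W^{(t+1)})}}{e^{-y_jf(x_j;W^{(t+1)})}}\le\frac{e^{-y_if(x_i;W^{(t)})}}{e^{-y_jf(x_j;W^{(t)})}}\cdot\exp\!\left(-\frac{g_j^{(t)}\alpha cR_{\min}^2}{n}\Big(\frac{g_i^{(t)}}{g_j^{(t)}}-\frac{R^2}{c}\Big)\right)\cdot\exp\!\left(\frac{\alpha R_{\max}^2}{(10R^2/c+10)n}\hat G(W^{(t)})\right).$$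
   Context: $f(x;W)=\sum_{j=1}^ma_j\phi(\langle w_j,x\rangle)$ with $a_j\in\{\pm1/\sqrt m\}$, gradients with respect to $W$. Logistic loss $\ell(z)=\log(1+e^{-z})$, $\hat L(W)=\frac1n\sum_i\ell(y_if(x_i;W))$. Sigmoid loss $g(z)=-\ell'(z)=1/(1+e^z)$, $g_i^{(t)}=g(y_if(x_i;W^{(t)}))$, $\hat G(W)=\frac1n\sum_ig(y_if(x_i;W))$. $R_{\max}=\max_i\|x_i\|$, $R_{\min}=\min_i\|x_i\|$. *)

theory Defs
  imports "HOL-Analysis.Analysis"
begin

definition net :: "(real \<Rightarrow> real) \<Rightarrow> real^'m \<Rightarrow> real^'d^'m \<Rightarrow> real^'d \<Rightarrow> real" where
  "net \<phi> a W x = (\<Sum>j\<in>UNIV. a $ j * \<phi> (W $ j \<bullet> x))"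

text \<open>Logistic loss and sigmoid loss g = - logistic'.\<close>
definition logistic :: "real \<Rightarrow> real" where
  "logistic z = ln (1 + exp (- z))"

definition sigloss :: "real \<Rightarrow> real" where
  "sigloss z = 1 / (1 + exp z)"

definition Lhat :: "(real \<Rightarrow> real) \<Rightarrow> real^'m \<Rightarrow> nat \<Rightarrow> (nat \<Rightarrow> real^'d) \<Rightarrow> (nat \<Rightarrow> real)
    \<Rightarrow> real^'d^'m \<Rightarrow> real" where
  "Lhat \<phi> a n x y W = (1 / real n) * (\<Sum>i<n. logistic (y i * net \<phi> a W (x i)))"

definition Ghat :: "(real \<Rightarrow> real) \<Rightarrow> real^'m \<Rightarrow> nat \<Rightarrow> (nat \<Rightarrow> real^'d) \<Rightarrow> (nat \<Rightarrow> real)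
    \<Rightarrow> real^'d^'m \<Rightarrow> real" where
  "Ghat \<phi> a n x y W = (1 / real n) * (\<Sum>i<n. sigloss (y i * net \<phi> a W (x i)))"

end

theory Submission
  imports Defs
begin


lemma phi_taylor:
  fixes \<phi> \<phi>' \<phi>'' :: "real \<Rightarrow> real"
  assumes d1: "\<And>u. (\<phi> has_real_derivative \<phi>' u) (at u)"
    and d2: "\<And>u. (\<phi>' has_real_derivative \<phi>'' u) (at u)"
    and hH: "\<And>u. \<bar>\<phi>'' u\<bar> \<le> H"
  shows "\<bar>\<phi> (u + h) - \<phi> u - \<phi>' u * h\<bar> \<le> H / 2 * h\<^sup>2"
proof (cases "h = 0")
  case True then show ?thesis by simp
next
  case False
  define diff where "diff = (\<lambda>k::nat. if k = 0 then \<phi> else if k = 1 then \<phi>' else \<phi>'')"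
  have "\<exists>t. (if u + h < u then u + h < t \<and> t < u else u < t \<and> t < u + h) \<and>
    \<phi> (u + h) = (\<Sum>m<2. (diff m u / fact m) * (u + h - u)^m) + (diff 2 t / fact 2) * (u + h - u)^2"
    apply (rule Taylor[where a="min u (u+h)" and b="max u (u+h)"])
    using False by (auto simp: diff_def d1 d2 less_2_cases_iff)
  then obtain t where t: "\<phi> (u + h) = \<phi> u + \<phi>' u * h + \<phi>'' t / 2 * h\<^sup>2"
    by (auto simp: diff_def eval_nat_numeral)
  have "\<bar>\<phi>'' t / 2 * h\<^sup>2\<bar> \<le> H / 2 * h\<^sup>2"
    using hH[of t] by (simp add: abs_mult mult_right_mono)
  then show ?thesis using t by simp
qed

lemma deriv_le1:
  fixes \<phi> :: "real \<Rightarrow> real"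
  assumes lip: "\<And>u v. \<bar>\<phi> u - \<phi> v\<bar> \<le> \<bar>u - v\<bar>"
    and d: "(\<phi> has_real_derivative D) (at u)"
  shows "\<bar>D\<bar> \<le> 1"
proof -
  have "((\<lambda>v. (\<phi> v - \<phi> u) / (v - u)) \<longlongrightarrow> D) (at u)"
    using d by (simp add: DERIV_def has_field_derivative_iff)
  then have "((\<lambda>v. \<bar>(\<phi> v - \<phi> u) / (v - u)\<bar>) \<longlongrightarrow> \<bar>D\<bar>) (at u)"
    by (rule tendsto_rabs)
  moreover have "\<forall>\<^sub>F v in at u. \<bar>(\<phi> v - \<phi> u) / (v - u)\<bar> \<le> 1"
    using lip by (auto intro!: always_eventually simp: abs_divide divide_le_eq_1)
  ultimately show ?thesis
    by (rule tendsto_upperbound) simp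
qed

lemma logistic_deriv: "(logistic has_real_derivative (- sigloss z)) (at z)"
proof -
  have "((\<lambda>z. ln (1 + exp (- z))) has_real_derivative (1 / (1 + exp (-z))) * (- exp (- z))) (at z)"
    by (auto intro!: derivative_eq_intros simp: add_pos_pos)
  moreover have "(1 / (1 + exp (-z))) * (- exp (- z)) = - sigloss z"
    unfolding sigloss_def by (simp add: field_simps exp_minus)
  ultimately show ?thesis unfolding logistic_def[abs_def] by simp
qed

lemma norm_vec_sq: "(norm (v :: real^'d^'m))\<^sup>2 = (\<Sum>j\<in>UNIV. (norm (v $ j))\<^sup>2)"
  by (simp add: power2_norm_eq_inner inner_vec_def)



lemma grad_unique:
  fixes f :: "'a::real_inner \<Rightarrow> real"
  assumes "GDERIV f w :> A" "GDERIV f w :> B" shows "A = B"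
proof -
  have "(\<lambda>h. inner h A) = (\<lambda>h. inner h B)"
    using has_derivative_unique assms unfolding gderiv_def by blast
  then have "inner (A - B) A = inner (A - B) B" by metis
  then have "inner (A - B) (A - B) = 0" by (simp add: inner_diff_right)
  then show ?thesis by simp
qed

lemma inner_outer: "(h::real^'d^'m) \<bullet> G = (\<Sum>j\<in>UNIV. h $ j \<bullet> G $ j)"
  by (rule inner_vec_def)

lemma net_grad:
  fixes \<phi> \<phi>' :: "real \<Rightarrow> real" and W :: "real^'d^'m"
  assumes d1: "\<And>u. (\<phi> has_real_derivative \<phi>' u) (at u)"
  shows "GDERIV (\<lambda>V. net \<phi> a V xi) W :> (\<chi> j. (a $ j * \<phi>' (W $ j \<bullet> xi)) *\<^sub>R xi)"
proof -
  have lin: "\<And>j. ((\<lambda>V::real^'d^'m. V $ j \<bullet> xi) has_derivative (\<lambda>h. h $ j \<bullet> xi)) (at W)"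
    by (intro bounded_linear_imp_has_derivative bounded_linear_compose[OF bounded_linear_inner_left bounded_linear_vec_nth])
  have "((\<lambda>V. \<Sum>j\<in>UNIV. a $ j * \<phi> (V $ j \<bullet> xi)) has_derivative
      (\<lambda>h. \<Sum>j\<in>UNIV. a $ j * ((h $ j \<bullet> xi) * \<phi>' (W $ j \<bullet> xi)))) (at W)"
    apply (rule has_derivative_sum)
    apply (rule has_derivative_mult_right)
    apply (rule DERIV_compose_FDERIV[OF d1 lin])
    done
  moreover have "(\<lambda>h. \<Sum>j\<in>UNIV. a $ j * ((h $ j \<bullet> xi) * \<phi>' (W $ j \<bullet> xi)))
      = (\<lambda>h. h \<bullet> (\<chi> j. (a $ j * \<phi>' (W $ j \<bullet> xi)) *\<^sub>R xi))"
    apply (rule ext) apply (subst inner_outer)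
    by (auto simp: inner_scaleR_right intro!: sum.cong)
  ultimately show ?thesis unfolding gderiv_def net_def[abs_def] by simp
qed

lemma Lhat_grad:
  fixes \<phi> :: "real \<Rightarrow> real" and W :: "real^'d^'m" and Gf :: "nat \<Rightarrow> real^'d^'m"
  assumes "\<And>i. i < n \<Longrightarrow> GDERIV (\<lambda>V. net \<phi> a V (x i)) W :> Gf i"
  shows "GDERIV (Lhat \<phi> a n x y) W :>
     (- (1 / real n) *\<^sub>R (\<Sum>k<n. (sigloss (y k * net \<phi> a W (x k)) * y k) *\<^sub>R Gf k))"
proof -
  have "\<And>k. k < n \<Longrightarrow> ((\<lambda>V. logistic (y k * net \<phi> a V (x k))) has_derivative
      (\<lambda>h. (y k * (h \<bullet> Gf k)) * (- sigloss (y k * net \<phi> a W (x k))))) (at W)"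
  proof -
    fix k assume k: "k < n"
    have "((\<lambda>V. y k * net \<phi> a V (x k)) has_derivative (\<lambda>h. y k * (h \<bullet> Gf k))) (at W)"
      using assms[OF k] unfolding gderiv_def by (rule has_derivative_mult_right)
    then show "?thesis k" by (rule DERIV_compose_FDERIV[OF logistic_deriv])
  qed
  then have "((\<lambda>V. (1 / real n) * (\<Sum>k<n. logistic (y k * net \<phi> a V (x k)))) has_derivative
      (\<lambda>h. (1 / real n) * (\<Sum>k<n. (y k * (h \<bullet> Gf k)) * (- sigloss (y k * net \<phi> a W (x k)))))) (at W)"
    by (intro has_derivative_mult_right has_derivative_sum) auto
  moreover have "(\<lambda>h. (1 / real n) * (\<Sum>k<n. (y k * (h \<bullet> Gf k)) * (- sigloss (y k * net \<phi> a W (x k)))))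
     = (\<lambda>h. h \<bullet> (- (1 / real n) *\<^sub>R (\<Sum>k<n. (sigloss (y k * net \<phi> a W (x k)) * y k) *\<^sub>R Gf k)))"
    by (auto simp: inner_sum_right sum_distrib_left sum_negf[symmetric] intro!: sum.cong)
  ultimately show ?thesis unfolding gderiv_def Lhat_def[abs_def] by simp
qed



lemma norm_outer_sq: "(norm (v :: real^'d^'m))\<^sup>2 = (\<Sum>j\<in>UNIV. (norm (v $ j))\<^sup>2)"
  by (simp add: power2_norm_eq_inner inner_outer)

lemma a_sq:
  assumes a_pm: "\<And>j. a $ j = 1 / sqrt (real CARD('m)) \<or> a $ j = - 1 / sqrt (real CARD('m))"
  shows "(a $ (j::'m::finite))\<^sup>2 = 1 / real CARD('m)"
  using a_pm[of j] by (auto simp: power_divide)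

lemma G0_norm:
  fixes a :: "real^'m" and W :: "real^'d^'m"
  assumes a_pm: "\<And>j. a $ j = 1 / sqrt (real CARD('m)) \<or> a $ j = - 1 / sqrt (real CARD('m))"
    and d: "\<And>u. \<bar>\<phi>' u\<bar> \<le> 1"
  shows "norm (\<chi> j. (a $ j * \<phi>' (W $ j \<bullet> xi)) *\<^sub>R xi) \<le> norm xi"
proof -
  have "(norm (\<chi> j. (a $ j * \<phi>' (W $ j \<bullet> xi)) *\<^sub>R xi))\<^sup>2
      = (\<Sum>j\<in>UNIV. (a $ j * \<phi>' (W $ j \<bullet> xi))\<^sup>2 * (norm xi)\<^sup>2)"
    by (simp add: norm_outer_sq power_mult_distrib)
  also have "\<dots> \<le> (\<Sum>j\<in>(UNIV::'m set). (1 / real CARD('m)) * (norm xi)\<^sup>2)"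
  proof (rule sum_mono)
    fix j :: 'm
    have "(\<phi>' (W $ j \<bullet> xi))\<^sup>2 \<le> 1" using d[of "W $ j \<bullet> xi"]
      by (simp add: abs_le_square_iff[of _ 1, simplified])
    then have "(a $ j)\<^sup>2 * (\<phi>' (W $ j \<bullet> xi))\<^sup>2 \<le> (a $ j)\<^sup>2 * 1"
      by (rule mult_left_mono) simp
    then have "(a $ j * \<phi>' (W $ j \<bullet> xi))\<^sup>2 \<le> 1 / real CARD('m)"
      using a_sq[OF a_pm, of j] by (simp only: power_mult_distrib mult_1_right)
    then show "(a $ j * \<phi>' (W $ j \<bullet> xi))\<^sup>2 * (norm xi)\<^sup>2 \<le> 1 / real CARD('m) * (norm xi)\<^sup>2"
      by (rule mult_right_mono) simp_all
  qed
  also have "\<dots> = (norm xi)\<^sup>2" by simp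
  finally show ?thesis by (simp add: power2_le_iff_abs_le)
qed

lemma net_rem:
  fixes a :: "real^'m" and W D :: "real^'d^'m" and \<phi> \<phi>' \<phi>'' :: "real \<Rightarrow> real"
  assumes a_pm: "\<And>j. a $ j = 1 / sqrt (real CARD('m)) \<or> a $ j = - 1 / sqrt (real CARD('m))"
    and d1: "\<And>u. (\<phi> has_real_derivative \<phi>' u) (at u)"
    and d2: "\<And>u. (\<phi>' has_real_derivative \<phi>'' u) (at u)"
    and hH: "\<And>u. \<bar>\<phi>'' u\<bar> \<le> H"
  shows "\<bar>net \<phi> a (W + D) xi - net \<phi> a W xi - D \<bullet> (\<chi> j. (a $ j * \<phi>' (W $ j \<bullet> xi)) *\<^sub>R xi)\<bar>
     \<le> H / 2 * (norm D)\<^sup>2 * (norm xi)\<^sup>2"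
proof -
  have H0: "0 \<le> H" using hH[of 0] by linarith
  have eq: "net \<phi> a (W + D) xi - net \<phi> a W xi - D \<bullet> (\<chi> j. (a $ j * \<phi>' (W $ j \<bullet> xi)) *\<^sub>R xi)
     = (\<Sum>j\<in>UNIV. a $ j * (\<phi> (W $ j \<bullet> xi + D $ j \<bullet> xi) - \<phi> (W $ j \<bullet> xi) - \<phi>' (W $ j \<bullet> xi) * (D $ j \<bullet> xi)))"
  proof -
    have e1: "D \<bullet> (\<chi> j. (a $ j * \<phi>' (W $ j \<bullet> xi)) *\<^sub>R xi) = (\<Sum>j\<in>UNIV. a $ j * \<phi>' (W $ j \<bullet> xi) * (D $ j \<bullet> xi))"
      by (simp add: inner_outer inner_scaleR_right)
    show ?thesis unfolding e1 net_def sum_subtractf[symmetric]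
      by (rule sum.cong) (simp_all add: inner_add_left right_diff_distrib)
  qed
  have "\<bar>\<dots>\<bar> \<le> (\<Sum>j\<in>UNIV. \<bar>a $ j * (\<phi> (W $ j \<bullet> xi + D $ j \<bullet> xi) - \<phi> (W $ j \<bullet> xi) - \<phi>' (W $ j \<bullet> xi) * (D $ j \<bullet> xi))\<bar>)"
    by (rule sum_abs)
  also have "\<dots> \<le> (\<Sum>j\<in>UNIV. H / 2 * ((norm (D $ j))\<^sup>2 * (norm xi)\<^sup>2))"
  proof (rule sum_mono)
    fix j :: 'm
    have c1: "real CARD('m) \<ge> 1" by (simp add: Suc_le_eq)
    have "\<bar>a $ j\<bar> \<le> 1" using a_pm[of j] c1 by (auto simp: abs_divide)
    moreover have "\<bar>\<phi> (W $ j \<bullet> xi + D $ j \<bullet> xi) - \<phi> (W $ j \<bullet> xi) - \<phi>' (W $ j \<bullet> xi) * (D $ j \<bullet> xi)\<bar>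
        \<le> H / 2 * (D $ j \<bullet> xi)\<^sup>2" by (rule phi_taylor[OF d1 d2 hH])
    moreover have "(D $ j \<bullet> xi)\<^sup>2 \<le> (norm (D $ j))\<^sup>2 * (norm xi)\<^sup>2"
    proof -
      have "\<bar>D $ j \<bullet> xi\<bar>\<^sup>2 \<le> (norm (D $ j) * norm xi)\<^sup>2"
        by (rule power_mono[OF Cauchy_Schwarz_ineq2]) simp
      then show ?thesis by (simp only: power2_abs power_mult_distrib)
    qed
    ultimately have X: "\<bar>\<phi> (W $ j \<bullet> xi + D $ j \<bullet> xi) - \<phi> (W $ j \<bullet> xi) - \<phi>' (W $ j \<bullet> xi) * (D $ j \<bullet> xi)\<bar>
        \<le> H / 2 * ((norm (D $ j))\<^sup>2 * (norm xi)\<^sup>2)"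
      using mult_left_mono[of "(D $ j \<bullet> xi)\<^sup>2" _ "H/2"] H0 by force
    have "\<bar>a $ j\<bar> * \<bar>\<phi> (W $ j \<bullet> xi + D $ j \<bullet> xi) - \<phi> (W $ j \<bullet> xi) - \<phi>' (W $ j \<bullet> xi) * (D $ j \<bullet> xi)\<bar>
        \<le> 1 * (H / 2 * ((norm (D $ j))\<^sup>2 * (norm xi)\<^sup>2))"
      by (rule mult_mono[OF \<open>\<bar>a $ j\<bar> \<le> 1\<close> X]) simp_all
    then show "\<bar>a $ j * (\<phi> (W $ j \<bullet> xi + D $ j \<bullet> xi) - \<phi> (W $ j \<bullet> xi) - \<phi>' (W $ j \<bullet> xi) * (D $ j \<bullet> xi))\<bar>
        \<le> H / 2 * ((norm (D $ j))\<^sup>2 * (norm xi)\<^sup>2)" by (simp add: abs_mult)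
  qed
  also have "\<dots> = H / 2 * (norm D)\<^sup>2 * (norm xi)\<^sup>2"
    by (simp add: norm_outer_sq sum_distrib_left sum_distrib_right mult.assoc)
  finally show ?thesis using eq by simp
qed


theorem mainTheorem9:
  fixes \<phi> \<phi>' \<phi>'' :: "real \<Rightarrow> real"
    and a :: "real^'m" and W :: "real^'d^'m"
    and n :: nat and x :: "nat \<Rightarrow> real^'d" and y :: "nat \<Rightarrow> real"
    and H c C' \<alpha> :: real
    and Gf :: "nat \<Rightarrow> real^'d^'m" and DL :: "real^'d^'m"
  assumes phi_lip: "\<And>u v. \<bar>\<phi> u - \<phi> v\<bar> \<le> \<bar>u - v\<bar>"
    and phi_d1: "\<And>u. (\<phi> has_real_derivative \<phi>' u) (at u)"
    and phi_d2: "\<And>u. (\<phi>' has_real_derivative \<phi>'' u) (at u)"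
    and phi_H: "\<And>u. \<bar>\<phi>'' u\<bar> \<le> H"
    and a_pm: "\<And>j. a $ j = 1 / sqrt (real CARD('m)) \<or> a $ j = - 1 / sqrt (real CARD('m))"
    and n_pos: "n \<ge> 1"
    and y_pm: "\<And>i. i < n \<Longrightarrow> y i = 1 \<or> y i = -1"
    and x_nz: "\<And>i. i < n \<Longrightarrow> x i \<noteq> 0"
    and grad_f: "\<And>i. i < n \<Longrightarrow> GDERIV (\<lambda>V. net \<phi> a V (x i)) W :> Gf i"
    and grad_L: "GDERIV (Lhat \<phi> a n x y) W :> DL"
    and c_pos: "c > 0"
    and C'_ge: "C' \<ge> 25 * ((Max (norm ` x ` {..<n}) / Min (norm ` x ` {..<n}))\<^sup>2) / c + 25"
    and near_orth: "\<And>i k. i < n \<Longrightarrow> k < n \<Longrightarrow> k \<noteq> i \<Longrightarrow>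
        (norm (Gf i))\<^sup>2 \<ge> C' * real n * \<bar>Gf i \<bullet> Gf k\<bar>"
    and persist: "\<And>i. i < n \<Longrightarrow> (norm (Gf i))\<^sup>2 \<ge> c * (norm (x i))\<^sup>2"
    and alpha_pos: "\<alpha> > 0"
    and alpha_le: "\<alpha> \<le> 1 / (5 * H * (Max (norm ` x ` {..<n}))\<^sup>2 * real n *
        (10 * ((Max (norm ` x ` {..<n}) / Min (norm ` x ` {..<n}))\<^sup>2) / c + 10))"
  shows "\<forall>i<n. \<forall>j<n.
    (let Rmax = Max (norm ` x ` {..<n}); Rmin = Min (norm ` x ` {..<n}); R = Rmax / Rmin;
         W' = W - \<alpha> *\<^sub>R DL;
         g = (\<lambda>k. sigloss (y k * net \<phi> a W (x k)))
     in exp (- y i * net \<phi> a W' (x i)) / exp (- y j * net \<phi> a W' (x j))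
        \<le> exp (- y i * net \<phi> a W (x i)) / exp (- y j * net \<phi> a W (x j))
           * exp (- (g j * \<alpha> * c * Rmin\<^sup>2 / real n) * (g i / g j - R\<^sup>2 / c))
           * exp (\<alpha> * Rmax\<^sup>2 / ((10 * R\<^sup>2 / c + 10) * real n) * Ghat \<phi> a n x y W))"
proof (intro allI impI)
  fix i j assume i: "i < n" and j: "j < n"
  define Rmax where "Rmax = Max (norm ` x ` {..<n})"
  define Rmin where "Rmin = Min (norm ` x ` {..<n})"
  define R where "R = Rmax / Rmin"
  define g where "g = (\<lambda>k. sigloss (y k * net \<phi> a W (x k)))"
  define Gh where "Gh = Ghat \<phi> a n x y W"
  define K where "K = 10 * R\<^sup>2 / c + 10"
  define D where "D = (\<alpha> / real n) *\<^sub>R (\<Sum>k<n. (g k * y k) *\<^sub>R Gf k)"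
  define F where "F = (\<lambda>k. y k * net \<phi> a W (x k))"
  define F' where "F' = (\<lambda>k. y k * net \<phi> a (W + D) (x k))"
  have npos: "real n > 0" using n_pos by simp
  have fin: "finite (norm ` x ` {..<n})" by simp
  have "norm (x 0) \<in> norm ` x ` {..<n}" using n_pos by auto
  then have ne: "norm ` x ` {..<n} \<noteq> {}" by blast
  have Rmax_ge: "\<And>k. k < n \<Longrightarrow> norm (x k) \<le> Rmax"
    unfolding Rmax_def using fin by (intro Max_ge) auto
  have Rmin_le: "\<And>k. k < n \<Longrightarrow> Rmin \<le> norm (x k)"
    unfolding Rmin_def using fin by (intro Min_le) auto
  have Rmin_pos: "Rmin > 0"
  proof -
    have "Rmin \<in> norm ` x ` {..<n}" unfolding Rmin_def using fin ne by (rule Min_in)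
    then show ?thesis using x_nz by auto
  qed
  have Rmax_pos: "Rmax > 0" using Rmin_pos Rmin_le[OF i] Rmax_ge[OF i] by linarith
  have H0: "0 \<le> H" using phi_H[of 0] by linarith
  have K_pos: "K > 0" unfolding K_def using c_pos by (simp add: add_nonneg_pos)
  have C'K: "C' \<ge> 5 / 2 * K" using C'_ge unfolding K_def R_def Rmax_def Rmin_def by simp
  have C'pos: "C' > 0" using C'K K_pos by linarith
  have Hpos: "H > 0"
  proof (rule ccontr)
    assume "\<not> H > 0" then have "H = 0" using H0 by simp
    then show False using alpha_le alpha_pos by simp
  qed
  have alpha_le': "\<alpha> * H * Rmax\<^sup>2 * (5 * real n * K) \<le> 1"
  proof -
    have p: "0 < 5 * H * Rmax\<^sup>2 * real n * K" using Hpos Rmax_pos npos K_pos by simp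
    have "\<alpha> \<le> 1 / (5 * H * Rmax\<^sup>2 * real n * K)"
      using alpha_le unfolding K_def R_def Rmax_def Rmin_def .
    then have "\<alpha> * (5 * H * Rmax\<^sup>2 * real n * K) \<le> 1" using p by (simp add: le_divide_eq)
    then show ?thesis by (simp add: algebra_simps)
  qed
  have dphi: "\<And>u. \<bar>\<phi>' u\<bar> \<le> 1" using deriv_le1[OF phi_lip phi_d1] .
  have Gf_eq: "Gf k = (\<chi> j. (a $ j * \<phi>' (W $ j \<bullet> x k)) *\<^sub>R x k)" if k: "k < n" for k
    using grad_unique[OF grad_f[OF k] net_grad[OF phi_d1]] .
  have normGf: "norm (Gf k) \<le> Rmax" if k: "k < n" for k
    using order_trans[OF G0_norm[OF a_pm dphi, where W=W and xi="x k"] Rmax_ge[OF k]] Gf_eq[OF k] by simp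
  have DL_eq: "DL = - (1 / real n) *\<^sub>R (\<Sum>k<n. (g k * y k) *\<^sub>R Gf k)"
    using grad_unique[OF grad_L Lhat_grad[OF grad_f]] by (simp add: g_def)
  have W'_eq: "W - \<alpha> *\<^sub>R DL = W + D"
    unfolding DL_eq D_def by (simp add: scaleR_scaleR)
  have g_pos: "\<And>k. 0 < g k" unfolding g_def sigloss_def by (simp add: add_pos_pos)
  have g_le: "\<And>k. g k \<le> 1" unfolding g_def sigloss_def by (simp add: divide_le_eq_1 add_pos_pos)
  have sum_g: "(\<Sum>k<n. g k) = real n * Gh"
    unfolding Gh_def Ghat_def g_def using npos by simp
  have Gh_ge: "0 \<le> Gh" using sum_g g_pos npos
    by (metis sum_nonneg less_imp_le zero_le_mult_iff not_less)
  have Gh_le: "Gh \<le> 1"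
  proof -
    have "(\<Sum>k<n. g k) \<le> (\<Sum>k<n. 1)" by (rule sum_mono) (rule g_le)
    then have "real n * Gh \<le> real n * 1" using sum_g by simp
    then show ?thesis using npos by simp
  qed
  have y_sq: "\<And>k. k < n \<Longrightarrow> y k * y k = 1" using y_pm by fastforce
  have y_abs: "\<And>k. k < n \<Longrightarrow> \<bar>y k\<bar> = 1" using y_pm by fastforce
  have normD: "norm D \<le> \<alpha> * Gh * Rmax"
  proof -
    have "norm (\<Sum>k<n. (g k * y k) *\<^sub>R Gf k) \<le> (\<Sum>k<n. norm ((g k * y k) *\<^sub>R Gf k))"
      by (rule norm_sum)
    also have "\<dots> \<le> (\<Sum>k<n. g k * Rmax)"
    proof (rule sum_mono)
      fix k assume "k \<in> {..<n}" then have k: "k < n" by simp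
      have "norm ((g k * y k) *\<^sub>R Gf k) = g k * norm (Gf k)"
        using y_abs[OF k] g_pos[of k] by (simp add: abs_mult)
      also have "\<dots> \<le> g k * Rmax" using normGf[OF k] g_pos[of k] by (simp add: mult_left_mono)
      finally show "norm ((g k * y k) *\<^sub>R Gf k) \<le> g k * Rmax" .
    qed
    also have "\<dots> = real n * Gh * Rmax" by (simp only: sum_distrib_right[symmetric] sum_g)
    finally have "norm (\<Sum>k<n. (g k * y k) *\<^sub>R Gf k) \<le> real n * Gh * Rmax" .
    then have "\<alpha> / real n * norm (\<Sum>k<n. (g k * y k) *\<^sub>R Gf k) \<le> \<alpha> / real n * (real n * Gh * Rmax)"
      using alpha_pos npos by (intro mult_left_mono) simp_all
    then show ?thesis unfolding D_def using alpha_pos npos by simp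
  qed
  define Q where "Q = H / 2 * (\<alpha> * Gh * Rmax)\<^sup>2 * Rmax\<^sup>2"
  have rem: "\<And>k. k < n \<Longrightarrow> \<bar>net \<phi> a (W + D) (x k) - net \<phi> a W (x k) - D \<bullet> Gf k\<bar> \<le> Q"
  proof -
    fix k assume k: "k < n"
    have "\<bar>net \<phi> a (W + D) (x k) - net \<phi> a W (x k) - D \<bullet> Gf k\<bar> \<le> H / 2 * (norm D)\<^sup>2 * (norm (x k))\<^sup>2"
      using net_rem[OF a_pm phi_d1 phi_d2 phi_H] Gf_eq[OF k] by simp
    also have "\<dots> \<le> H / 2 * (\<alpha> * Gh * Rmax)\<^sup>2 * Rmax\<^sup>2"
      using normD Rmax_ge[OF k] H0
      by (intro mult_mono power_mono) simp_all
    finally show "?thesis k" unfolding Q_def .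
  qed
  define E where "E = Gh * Rmax\<^sup>2 / C'"
  have lin: "\<And>k. k < n \<Longrightarrow> \<bar>y k * (D \<bullet> Gf k) - \<alpha> / real n * (g k * (norm (Gf k))\<^sup>2)\<bar> \<le> \<alpha> / real n * E"
  proof -
    fix k assume k: "k < n"
    have split: "(\<Sum>l<n. g l * y l * y k * (Gf l \<bullet> Gf k))
        = g k * (norm (Gf k))\<^sup>2 + (\<Sum>l\<in>{..<n} - {k}. g l * y l * y k * (Gf l \<bullet> Gf k))"
      using k y_sq[OF k] by (simp add: sum.remove power2_norm_eq_inner)
    have ib: "\<And>l. l < n \<Longrightarrow> l \<noteq> k \<Longrightarrow> \<bar>Gf l \<bullet> Gf k\<bar> \<le> Rmax\<^sup>2 / (C' * real n)"
    proof -
      fix l assume l: "l < n" "l \<noteq> k"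
      have "C' * real n * \<bar>Gf k \<bullet> Gf l\<bar> \<le> (norm (Gf k))\<^sup>2" using near_orth[OF k l(1) l(2)] .
      also have "\<dots> \<le> Rmax\<^sup>2" using normGf[OF k] by (simp add: power_mono)
      finally show "\<bar>Gf l \<bullet> Gf k\<bar> \<le> Rmax\<^sup>2 / (C' * real n)"
        using C'pos npos by (simp add: le_divide_eq inner_commute mult.commute)
    qed
    have "\<bar>\<Sum>l\<in>{..<n} - {k}. g l * y l * y k * (Gf l \<bullet> Gf k)\<bar>
        \<le> (\<Sum>l\<in>{..<n} - {k}. \<bar>g l * y l * y k * (Gf l \<bullet> Gf k)\<bar>)" by (rule sum_abs)
    also have "\<dots> \<le> (\<Sum>l\<in>{..<n} - {k}. g l * (Rmax\<^sup>2 / (C' * real n)))"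
    proof (rule sum_mono)
      fix l assume "l \<in> {..<n} - {k}"
      then have l: "l < n" "l \<noteq> k" by auto
      have "\<bar>g l * y l * y k * (Gf l \<bullet> Gf k)\<bar> = g l * \<bar>Gf l \<bullet> Gf k\<bar>"
        using y_abs[OF k] y_abs[OF l(1)] g_pos[of l] by (simp add: abs_mult)
      also have "\<dots> \<le> g l * (Rmax\<^sup>2 / (C' * real n))"
        using ib[OF l] g_pos[of l] by (intro mult_left_mono) simp_all
      finally show "\<bar>g l * y l * y k * (Gf l \<bullet> Gf k)\<bar> \<le> g l * (Rmax\<^sup>2 / (C' * real n))" .
    qed
    also have "\<dots> \<le> (\<Sum>l<n. g l * (Rmax\<^sup>2 / (C' * real n)))"
    proof (rule sum_mono2)
      fix l
      have "0 \<le> Rmax\<^sup>2 / (C' * real n)" using C'pos npos by simp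
      then show "0 \<le> g l * (Rmax\<^sup>2 / (C' * real n))" by (rule mult_nonneg_nonneg[OF less_imp_le[OF g_pos]])
    qed auto
    also have "\<dots> = (\<Sum>l<n. g l) * (Rmax\<^sup>2 / (C' * real n))"
      by (rule sum_distrib_right[symmetric])
    also have "\<dots> = E"
      unfolding E_def sum_g using npos C'pos by (simp add: field_simps)
    finally have sb: "\<bar>\<Sum>l\<in>{..<n} - {k}. g l * y l * y k * (Gf l \<bullet> Gf k)\<bar> \<le> E" .
    have "y k * (D \<bullet> Gf k) = \<alpha> / real n * (\<Sum>l<n. g l * y l * y k * (Gf l \<bullet> Gf k))"
      unfolding D_def by (simp add: inner_sum_left sum_distrib_left mult_ac)
    then have eq2: "y k * (D \<bullet> Gf k) - \<alpha> / real n * (g k * (norm (Gf k))\<^sup>2)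
        = \<alpha> / real n * (\<Sum>l\<in>{..<n} - {k}. g l * y l * y k * (Gf l \<bullet> Gf k))"
      using split by (simp add: distrib_left)
    have "\<bar>\<alpha> / real n * (\<Sum>l\<in>{..<n} - {k}. g l * y l * y k * (Gf l \<bullet> Gf k))\<bar>
        = \<alpha> / real n * \<bar>\<Sum>l\<in>{..<n} - {k}. g l * y l * y k * (Gf l \<bullet> Gf k)\<bar>"
      using alpha_pos npos by (simp add: abs_mult)
    also have "\<dots> \<le> \<alpha> / real n * E"
      using sb alpha_pos npos by (intro mult_left_mono) simp_all
    finally show "?thesis k" unfolding eq2 .
  qed
  define A where "A = - (g j * \<alpha> * c * Rmin\<^sup>2 / real n) * (g i / g j - R\<^sup>2 / c)"
  define B where "B = \<alpha> * Rmax\<^sup>2 / (K * real n) * Gh"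
  have A_eq: "A = - (\<alpha> / real n) * (g i * c * Rmin\<^sup>2) + (\<alpha> / real n) * (g j * Rmax\<^sup>2)"
  proof -
    have "R\<^sup>2 * Rmin\<^sup>2 = Rmax\<^sup>2" unfolding R_def using Rmin_pos by (simp add: power_divide)
    then show ?thesis unfolding A_def using g_pos[of j] c_pos npos
      by (simp add: field_simps)
  qed
  have EB: "\<alpha> / real n * E \<le> 2 / 5 * B"
  proof -
    have "Gh * Rmax\<^sup>2 / C' \<le> Gh * Rmax\<^sup>2 / (5 / 2 * K)"
      using C'K K_pos Gh_ge by (intro divide_left_mono) simp_all
    then have "\<alpha> / real n * E \<le> \<alpha> / real n * (Gh * Rmax\<^sup>2 / (5 / 2 * K))"
      unfolding E_def using alpha_pos npos by (intro mult_left_mono) simp_all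
    also have "\<dots> = 2 / 5 * B" unfolding B_def by (simp add: field_simps)
    finally show ?thesis .
  qed
  have QB: "Q \<le> B / 10"
  proof -
    define t where "t = \<alpha> * H * Rmax\<^sup>2"
    have t0: "0 \<le> t" unfolding t_def using alpha_pos H0 by simp
    have t1: "t \<le> 1 / (5 * real n * K)" using alpha_le' K_pos npos
      unfolding t_def by (simp add: le_divide_eq)
    have v: "\<alpha> * Gh\<^sup>2 * Rmax\<^sup>2 \<le> \<alpha> * Gh * Rmax\<^sup>2"
    proof -
      have "Gh\<^sup>2 \<le> Gh" using Gh_ge Gh_le by (simp add: power2_eq_square mult_left_le)
      then show ?thesis using alpha_pos by (simp add: mult_left_mono mult_right_mono)
    qed
    have "Q = t / 2 * (\<alpha> * Gh\<^sup>2 * Rmax\<^sup>2)" unfolding Q_def t_def by (simp add: power_mult_distrib power2_eq_square)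
    also have "\<dots> \<le> (1 / (5 * real n * K)) / 2 * (\<alpha> * Gh * Rmax\<^sup>2)"
    proof -
      have h1: "t / 2 \<le> (1 / (5 * real n * K)) / 2" using t1 by (simp add: mult_ac)
      have h2: "0 \<le> (1 / (5 * real n * K)) / 2" using K_pos npos by simp
      have h3: "0 \<le> \<alpha> * Gh\<^sup>2 * Rmax\<^sup>2" using alpha_pos by simp
      show ?thesis by (rule mult_mono[OF h1 v h2 h3])
    qed
    also have "\<dots> = B / 10" unfolding B_def by (simp add: field_simps)
    finally show ?thesis .
  qed
  have key: "- F' i + F' j \<le> - F i + F j + A + B"
  proof -
    have Fk: "\<And>k. k < n \<Longrightarrow> F' k = F k + y k * (D \<bullet> Gf k) + y k * (net \<phi> a (W + D) (x k) - net \<phi> a W (x k) - D \<bullet> Gf k)"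
      unfolding F_def F'_def by (simp add: algebra_simps)
    have r: "\<And>k. k < n \<Longrightarrow> \<bar>y k * (net \<phi> a (W + D) (x k) - net \<phi> a W (x k) - D \<bullet> Gf k)\<bar> \<le> Q"
      using rem y_abs by (simp add: abs_mult)
    have li: "y i * (D \<bullet> Gf i) \<ge> \<alpha> / real n * (g i * c * Rmin\<^sup>2) - \<alpha> / real n * E"
    proof -
      have "c * Rmin\<^sup>2 \<le> c * (norm (x i))\<^sup>2"
        using Rmin_le[OF i] Rmin_pos c_pos by (intro mult_left_mono power_mono) simp_all
      also have "\<dots> \<le> (norm (Gf i))\<^sup>2" using persist[OF i] .
      finally have "\<alpha> / real n * (g i * (c * Rmin\<^sup>2)) \<le> \<alpha> / real n * (g i * (norm (Gf i))\<^sup>2)"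
        using g_pos[of i] alpha_pos npos by (intro mult_left_mono) simp_all
      then show ?thesis using lin[OF i] by (simp add: abs_le_iff mult_ac)
    qed
    have lj: "y j * (D \<bullet> Gf j) \<le> \<alpha> / real n * (g j * Rmax\<^sup>2) + \<alpha> / real n * E"
    proof -
      have "(norm (Gf j))\<^sup>2 \<le> Rmax\<^sup>2" using normGf[OF j] by (simp add: power_mono)
      then have "\<alpha> / real n * (g j * (norm (Gf j))\<^sup>2) \<le> \<alpha> / real n * (g j * Rmax\<^sup>2)"
        using g_pos[of j] alpha_pos npos by (intro mult_left_mono) simp_all
      then show ?thesis using lin[OF j] by (simp add: abs_le_iff)
    qed
    show ?thesis using Fk[OF i] Fk[OF j] r[OF i] r[OF j] li lj EB QB A_eq
      by (simp add: abs_le_iff)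
  qed
  have "exp (- F' i) / exp (- F' j) \<le> exp (- F i) / exp (- F j) * exp A * exp B"
    using key by (simp add: exp_diff[symmetric] exp_add[symmetric])
  then show "let Rmax = Max (norm ` x ` {..<n}); Rmin = Min (norm ` x ` {..<n}); R = Rmax / Rmin;
         W' = W - \<alpha> *\<^sub>R DL;
         g = (\<lambda>k. sigloss (y k * net \<phi> a W (x k)))
     in exp (- y i * net \<phi> a W' (x i)) / exp (- y j * net \<phi> a W' (x j))
        \<le> exp (- y i * net \<phi> a W (x i)) / exp (- y j * net \<phi> a W (x j))
           * exp (- (g j * \<alpha> * c * Rmin\<^sup>2 / real n) * (g i / g j - R\<^sup>2 / c))
           * exp (\<alpha> * Rmax\<^sup>2 / ((10 * R\<^sup>2 / c + 10) * real n) * Ghat \<phi> a n x y W)"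
    unfolding Let_def W'_eq F_def F'_def A_def B_def Gh_def K_def R_def g_def Rmax_def Rmin_def
    by simp
qed

end
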